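(* If an upper-embeddable cubic graph $G$ contains a loop, then $G$ is tightly two-face-embeddable.
   Context: Graphs are finite; loops and multiple edges are allowed; a cubic graph is $3$-regular. For a connected graph $H$, $\beta(H)=|E(H)|-|V(H)|+1$. A connected graph is upper-embeddable if it has a cellular embedding (all faces open discs) into a closed orientable surface with at most two faces; a cubic upper-embeddable graph with $\beta$ odd is called two-face-embeddable (it has such an embedding with exactly two faces). In an upper-embeddable cubic graph $G$, a pair $\{x,y\}$ of distinct vertices is removable if $x$ and $y$ are joined by exactly one edge, this edge $xy$ is not a bridge, and $G-\{x,y\}$ is (connected and) upper-embeddable. $G$ is amply upper-embeddable if it is upper-embeddable and has a removable pair; it is tightly upper-embeddable if it is upper-embeddable but not amply upper-embeddable. A two-face-embeddable cubic graph is tightly two-face-embeddable if it is not amply upper-embeddable. *)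

theory Defs
  imports Main
begin

text \<open>Finite multigraphs (loops and multiple edges allowed) in dart (half-edge) form:
  V is the vertex set, D the dart set, \<alpha> a fixed-point-free involution on D whose
  orbits {d, \<alpha> d} are the edges, and h d the vertex at which dart d lies.\<close>

definition graph :: "'v set \<Rightarrow> 'd set \<Rightarrow> ('d \<Rightarrow> 'd) \<Rightarrow> ('d \<Rightarrow> 'v) \<Rightarrow> bool" where
  "graph V D \<alpha> h \<longleftrightarrow> finite V \<and> finite D \<and>
     (\<forall>d\<in>D. \<alpha> d \<in> D \<and> \<alpha> d \<noteq> d \<and> \<alpha> (\<alpha> d) = d \<and> h d \<in> V)"

definition degree :: "'d set \<Rightarrow> ('d \<Rightarrow> 'v) \<Rightarrow> 'v \<Rightarrow> nat" where
  "degree D h v = card {d\<in>D. h d = v}"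

definition cubic :: "'v set \<Rightarrow> 'd set \<Rightarrow> ('d \<Rightarrow> 'd) \<Rightarrow> ('d \<Rightarrow> 'v) \<Rightarrow> bool" where
  "cubic V D \<alpha> h \<longleftrightarrow> graph V D \<alpha> h \<and> (\<forall>v\<in>V. degree D h v = 3)"

definition has_loop :: "'d set \<Rightarrow> ('d \<Rightarrow> 'd) \<Rightarrow> ('d \<Rightarrow> 'v) \<Rightarrow> bool" where
  "has_loop D \<alpha> h \<longleftrightarrow> (\<exists>d\<in>D. h (\<alpha> d) = h d)"

definition adj :: "'d set \<Rightarrow> ('d \<Rightarrow> 'd) \<Rightarrow> ('d \<Rightarrow> 'v) \<Rightarrow> ('v \<times> 'v) set" where
  "adj D \<alpha> h = {(h d, h (\<alpha> d)) | d. d \<in> D}"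

definition connected_graph :: "'v set \<Rightarrow> 'd set \<Rightarrow> ('d \<Rightarrow> 'd) \<Rightarrow> ('d \<Rightarrow> 'v) \<Rightarrow> bool" where
  "connected_graph V D \<alpha> h \<longleftrightarrow> V \<noteq> {} \<and> (\<forall>u\<in>V. \<forall>w\<in>V. (u, w) \<in> (adj D \<alpha> h)\<^sup>*)"

text \<open>Cycle rank (Betti number) \<beta>(H) = |E(H)| - |V(H)| + 1; |E| = |D| / 2.\<close>
definition beta :: "'v set \<Rightarrow> 'd set \<Rightarrow> int" where
  "beta V D = int (card D div 2) - int (card V) + 1"

definition orb :: "('d \<Rightarrow> 'd) \<Rightarrow> 'd \<Rightarrow> 'd set" where
  "orb f d = {(f ^^ n) d | n. True}"

definition rotation_system :: "'d set \<Rightarrow> ('d \<Rightarrow> 'v) \<Rightarrow> ('d \<Rightarrow> 'd) \<Rightarrow> bool" where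
  "rotation_system D h \<sigma> \<longleftrightarrow> bij_betw \<sigma> D D \<and>
     (\<forall>d\<in>D. orb \<sigma> d = {d'\<in>D. h d' = h d})"

text \<open>Number of faces of the cellular orientable embedding determined by \<sigma>
  (Heffter-Edmonds face tracing): the orbits of \<sigma> \<circ> \<alpha> on the darts.
  A graph without edges (a single vertex in the connected case) has one face.\<close>
definition num_faces :: "'d set \<Rightarrow> ('d \<Rightarrow> 'd) \<Rightarrow> ('d \<Rightarrow> 'd) \<Rightarrow> nat" where
  "num_faces D \<alpha> \<sigma> = (if D = {} then 1 else card ((\<lambda>d. orb (\<sigma> \<circ> \<alpha>) d) ` D))"

definition upper_embeddable :: "'v set \<Rightarrow> 'd set \<Rightarrow> ('d \<Rightarrow> 'd) \<Rightarrow> ('d \<Rightarrow> 'v) \<Rightarrow> bool" where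
  "upper_embeddable V D \<alpha> h \<longleftrightarrow> graph V D \<alpha> h \<and> connected_graph V D \<alpha> h \<and>
     (\<exists>\<sigma>. rotation_system D h \<sigma> \<and> num_faces D \<alpha> \<sigma> \<le> 2)"

definition two_face_embeddable :: "'v set \<Rightarrow> 'd set \<Rightarrow> ('d \<Rightarrow> 'd) \<Rightarrow> ('d \<Rightarrow> 'v) \<Rightarrow> bool" where
  "two_face_embeddable V D \<alpha> h \<longleftrightarrow> cubic V D \<alpha> h \<and> upper_embeddable V D \<alpha> h \<and> odd (beta V D)"

definition del_darts :: "'d set \<Rightarrow> ('d \<Rightarrow> 'd) \<Rightarrow> ('d \<Rightarrow> 'v) \<Rightarrow> 'v set \<Rightarrow> 'd set" where
  "del_darts D \<alpha> h S = {d\<in>D. h d \<notin> S \<and> h (\<alpha> d) \<notin> S}"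

definition is_bridge :: "'d set \<Rightarrow> ('d \<Rightarrow> 'd) \<Rightarrow> ('d \<Rightarrow> 'v) \<Rightarrow> 'd \<Rightarrow> bool" where
  "is_bridge D \<alpha> h d \<longleftrightarrow> (h d, h (\<alpha> d)) \<notin> (adj (D - {d, \<alpha> d}) \<alpha> h)\<^sup>*"

definition removable :: "'v set \<Rightarrow> 'd set \<Rightarrow> ('d \<Rightarrow> 'd) \<Rightarrow> ('d \<Rightarrow> 'v) \<Rightarrow> 'v \<Rightarrow> 'v \<Rightarrow> bool" where
  "removable V D \<alpha> h x y \<longleftrightarrow> x \<in> V \<and> y \<in> V \<and> x \<noteq> y \<and>
     (\<exists>d\<in>D. {e\<in>D. h e = x \<and> h (\<alpha> e) = y} = {d} \<and> \<not> is_bridge D \<alpha> h d) \<and>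
     upper_embeddable (V - {x, y}) (del_darts D \<alpha> h {x, y}) \<alpha> h"

definition amply_upper_embeddable :: "'v set \<Rightarrow> 'd set \<Rightarrow> ('d \<Rightarrow> 'd) \<Rightarrow> ('d \<Rightarrow> 'v) \<Rightarrow> bool" where
  "amply_upper_embeddable V D \<alpha> h \<longleftrightarrow> upper_embeddable V D \<alpha> h \<and> (\<exists>x y. removable V D \<alpha> h x y)"

definition tightly_two_face_embeddable :: "'v set \<Rightarrow> 'd set \<Rightarrow> ('d \<Rightarrow> 'd) \<Rightarrow> ('d \<Rightarrow> 'v) \<Rightarrow> bool" where
  "tightly_two_face_embeddable V D \<alpha> h \<longleftrightarrow>
     two_face_embeddable V D \<alpha> h \<and> \<not> amply_upper_embeddable V D \<alpha> h"

end

theory Submission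
  imports Defs "HOL-Combinatorics.Cycles"
begin

definition norb :: "('d \<Rightarrow> 'd) \<Rightarrow> 'd set \<Rightarrow> nat" where
  "norb p S = card (orb p ` S)"

lemma orb_self: "x \<in> orb p x"
  unfolding orb_def by (auto intro: exI[of _ 0])

lemma orb_step: "y \<in> orb p x \<Longrightarrow> p y \<in> orb p x"
proof -
  assume "y \<in> orb p x"
  then obtain n where "y = (p ^^ n) x" unfolding orb_def by auto
  then have "p y = (p ^^ Suc n) x" by simp
  then show ?thesis unfolding orb_def by blast
qed

lemma orb_fix: "p x = x \<Longrightarrow> orb p x = {x}"
proof -
  assume a: "p x = x"
  have "(p ^^ n) x = x" for n by (induction n) (auto simp: a)
  then show ?thesis unfolding orb_def by auto
qed

lemma funpow_permutes_in: "p permutes S \<Longrightarrow> x \<in> S \<Longrightarrow> (p ^^ n) x \<in> S"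
  by (induction n) (auto simp: permutes_in_image)

lemma orb_subset: "p permutes S \<Longrightarrow> x \<in> S \<Longrightarrow> orb p x \<subseteq> S"
  unfolding orb_def using funpow_permutes_in by fastforce

lemma orb_trans: "y \<in> orb p x \<Longrightarrow> orb p y \<subseteq> orb p x"
proof
  fix z assume "y \<in> orb p x" "z \<in> orb p y"
  then obtain n m where "y = (p ^^ n) x" "z = (p ^^ m) y" unfolding orb_def by auto
  then have "z = (p ^^ (m + n)) x" by (simp add: funpow_add)
  then show "z \<in> orb p x" unfolding orb_def by auto
qed

lemma orb_sym_perm:
  assumes "permutation p" "y \<in> orb p x"
  shows "x \<in> orb p y"
proof -
  obtain n where y: "y = (p ^^ n) x" using assms(2) unfolding orb_def by auto
  obtain m where m: "m > n" "(p ^^ m) = id" using permutation_is_nilpotent'[OF assms(1)] by blast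
  have "(p ^^ (m - n)) y = (p ^^ (m - n + n)) x" using y by (simp add: funpow_add)
  also have "\<dots> = x" using m by simp
  finally show ?thesis unfolding orb_def by (auto intro!: exI[of _ "m - n"])
qed

lemma orb_eq_perm: "permutation p \<Longrightarrow> y \<in> orb p x \<Longrightarrow> orb p y = orb p x"
  using orb_trans orb_sym_perm by (metis subset_antisym)

lemma norb_le: "finite S \<Longrightarrow> norb p S \<le> card S"
  unfolding norb_def by (rule card_image_le)

lemma orb_remove:
  assumes p: "p permutes S" and x: "x \<noteq> e"
  defines "q \<equiv> Transposition.transpose e (p e) \<circ> p"
  shows "orb q x = orb p x - {e}"
proof
  have inj: "inj p" using p permutes_inj by blast
  have "(q ^^ n) x \<in> orb p x \<and> (q ^^ n) x \<noteq> e" for n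
  proof (induction n)
    case 0 then show ?case using x orb_self by simp
  next
    case (Suc n)
    define y where "y = (q ^^ n) x"
    have y: "y \<in> orb p x" "y \<noteq> e" using Suc y_def by auto
    have "q y \<in> orb p x \<and> q y \<noteq> e"
    proof (cases "p y = e")
      case True
      then have "p e \<noteq> e" using y inj by (metis injD)
      then show ?thesis using True y orb_step[OF orb_step[OF y(1)]] by (simp add: q_def)
    next
      case False
      have "p y \<noteq> p e" using y inj by (metis injD)
      then show ?thesis using False y orb_step[OF y(1)] by (simp add: q_def transpose_def)
    qed
    then show ?case by (simp add: y_def)
  qed
  then show "orb q x \<subseteq> orb p x - {e}" unfolding orb_def by auto
next
  have inj: "inj p" using p permutes_inj by blast
  have "(p ^^ n) x \<noteq> e \<longrightarrow> (p ^^ n) x \<in> orb q x" for n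
  proof (induction n rule: less_induct)
    case (less n)
    show ?case
    proof (cases n)
      case 0 then show ?thesis by (simp add: orb_self)
    next
      case (Suc m)
      show ?thesis
      proof
        assume ne: "(p ^^ n) x \<noteq> e"
        show "(p ^^ n) x \<in> orb q x"
        proof (cases "(p ^^ m) x = e")
          case False
          then have "(p ^^ m) x \<in> orb q x" using less Suc by auto
          then have "q ((p ^^ m) x) \<in> orb q x" by (rule orb_step)
          moreover have "p ((p ^^ m) x) \<noteq> p e" using False inj by (metis injD)
          moreover have "q ((p ^^ m) x) = (p ^^ n) x"
            using ne Suc \<open>p ((p ^^ m) x) \<noteq> p e\<close> by (simp add: q_def transpose_def)
          ultimately show ?thesis by simp
        next
          case True
          then obtain k where k: "m = Suc k" using x by (cases m) auto
          have pe: "p e \<noteq> e" using ne True Suc by simp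
          have "(p ^^ k) x \<noteq> e" using True k pe by auto
          then have "(p ^^ k) x \<in> orb q x" using less Suc k by auto
          then have "q ((p ^^ k) x) \<in> orb q x" by (rule orb_step)
          moreover have "q ((p ^^ k) x) = (p ^^ n) x"
            using True k Suc by (simp add: q_def)
          ultimately show ?thesis by simp
        qed
      qed
    qed
  qed
  then show "orb p x - {e} \<subseteq> orb q x" unfolding orb_def by auto
qed

lemma parity_perm:
  assumes "finite S" "p permutes S"
  shows "evenperm p \<longleftrightarrow> even (card S - norb p S)"
  using assms
proof (induction S arbitrary: p rule: finite_induct)
  case empty
  then show ?case by (simp add: norb_def)
next
  case (insert e F)
  let ?S = "insert e F"
  define q where "q = Transposition.transpose e (p e) \<circ> p"
  have pS: "p e \<in> ?S" using permutes_in_image[OF insert.prems] by simp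
  have qS: "q permutes ?S" unfolding q_def
    by (rule permutes_compose[OF insert.prems permutes_swap_id]) (use pS in auto)
  have qF: "q permutes F"
    by (rule permutes_superset[OF qS]) (auto simp: q_def)
  have permp: "permutation p" using insert.prems insert.hyps(1) permutation_permutes by blast
  have ev: "evenperm q \<longleftrightarrow> (e = p e) = evenperm p"
    unfolding q_def by (simp add: evenperm_comp[OF permutation_swap_id permp] evenperm_swap)
  have IH: "evenperm q \<longleftrightarrow> even (card F - norb q F)" using insert.IH[OF qF] .
  have orbq: "orb q ` F = (\<lambda>X. X - {e}) ` (orb p ` F)"
  proof -
    have "orb q ` F = (\<lambda>x. orb p x - {e}) ` F"
    proof (rule image_cong[OF refl])
      fix x assume "x \<in> F"
      then have "x \<noteq> e" using insert.hyps(2) by auto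
      then show "orb q x = orb p x - {e}" unfolding q_def by (rule orb_remove[OF insert.prems])
    qed
    then show ?thesis by (simp add: image_image)
  qed
  have inj: "inj p" using insert.prems permutes_inj by blast
  have cnt: "norb p ?S = norb q F + (if p e = e then 1 else 0)"
  proof (cases "p e = e")
    case True
    have "(\<lambda>X. X - {e}) ` (orb p ` F) = id ` (orb p ` F)"
    proof (rule image_cong[OF refl])
      fix X assume "X \<in> orb p ` F"
      then obtain x where x: "x \<in> F" "X = orb p x" by auto
      have "e \<notin> orb p x"
      proof
        assume "e \<in> orb p x"
        then have "x \<in> orb p e" using orb_sym_perm[OF permp] by blast
        then show False using orb_fix[of p e, OF True] x insert.hyps(2) by auto
      qed
      then show "X - {e} = id X" using x by auto
    qed
    then have eq: "orb q ` F = orb p ` F" unfolding orbq by simp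
    have "orb p ` ?S = insert {e} (orb p ` F)" using orb_fix[of p e, OF True] by auto
    moreover have "{e} \<notin> orb p ` F"
    proof
      assume "{e} \<in> orb p ` F"
      then obtain x where "x \<in> F" "{e} = orb p x" by auto
      then show False using orb_self[of x p] insert.hyps(2) by auto
    qed
    ultimately show ?thesis using True eq insert.hyps(1) by (simp add: norb_def)
  next
    case False
    have pF: "p e \<in> F" using pS False by auto
    have "orb p e = orb p (p e)"
      using orb_eq_perm[OF permp orb_step[OF orb_self]] by simp
    then have e1: "orb p ` ?S = orb p ` F" using pF by auto
    have "inj_on (\<lambda>X. X - {e}) (orb p ` F)"
    proof (rule inj_onI)
      fix X Y assume XY: "X \<in> orb p ` F" "Y \<in> orb p ` F" "X - {e} = Y - {e}"
      then obtain x y where xy: "x \<in> F" "y \<in> F" "X = orb p x" "Y = orb p y" by auto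
      have "x \<in> Y" using XY xy orb_self[of x p] insert.hyps(2) by blast
      then show "X = Y" using xy orb_eq_perm[OF permp] by auto
    qed
    then have "norb q F = norb p ?S"
      unfolding norb_def orbq e1 by (simp add: card_image)
    then show ?thesis using False by simp
  qed
  have le: "norb q F \<le> card F" using norb_le insert.hyps(1) by blast
  show ?case using ev IH cnt le insert(1,2) by auto
qed

lemma funpow_agree:
  assumes "\<And>x. x \<in> D \<Longrightarrow> f x \<in> D" "\<And>x. x \<in> D \<Longrightarrow> g x = f x" "d \<in> D"
  shows "(g ^^ n) d = (f ^^ n) d \<and> (f ^^ n) d \<in> D"
  by (induction n) (use assms in auto)

lemma orb_agree:
  assumes "\<And>x. x \<in> D \<Longrightarrow> f x \<in> D" "\<And>x. x \<in> D \<Longrightarrow> g x = f x" "d \<in> D"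
  shows "orb g d = orb f d"
  unfolding orb_def using funpow_agree[OF assms] by auto

lemma orb_invol:
  assumes "a (a d) = d"
  shows "orb a d = {d, a d}"
proof -
  have e: "(a ^^ n) d = (if even n then d else a d)" for n
    by (induction n) (use assms in auto)
  have "d \<in> orb a d" "a d \<in> orb a d" by (rule orb_self, rule orb_step[OF orb_self])
  moreover have "orb a d \<subseteq> {d, a d}" unfolding orb_def using e by auto
  ultimately show ?thesis by blast
qed

lemma arith_par:
  fixes n f k m :: nat
  assumes "even (n - f) \<longleftrightarrow> (even (n - k) \<longleftrightarrow> even (n - m))" "n = 2 * m" "f \<le> n" "k \<le> n"
  shows "even f \<longleftrightarrow> odd (int (n div 2) - int k + 1)"
proof -
  have a: "even (n - f) \<longleftrightarrow> even f" "even (n - k) \<longleftrightarrow> even k" "even (n - m) \<longleftrightarrow> even m"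
    using assms by auto
  have b: "n div 2 = m" using assms by simp
  have c: "odd (int m - int k + 1) \<longleftrightarrow> (even m \<longleftrightarrow> even k)" by simp
  show ?thesis using assms(1) unfolding a b c by blast
qed

lemma euler_parity:
  assumes g: "graph V D \<alpha> h" and c: "connected_graph V D \<alpha> h" and ne: "D \<noteq> {}"
    and r: "rotation_system D h \<sigma>"
  shows "even (num_faces D \<alpha> \<sigma>) \<longleftrightarrow> odd (beta V D)"
proof -
  have fD: "finite D" and fV: "finite V" using g unfolding graph_def by auto
  have aD: "\<And>d. d \<in> D \<Longrightarrow> \<alpha> d \<in> D \<and> \<alpha> d \<noteq> d \<and> \<alpha> (\<alpha> d) = d \<and> h d \<in> V"
    using g unfolding graph_def by auto
  have bs: "bij_betw \<sigma> D D" and orbs: "\<And>d. d \<in> D \<Longrightarrow> orb \<sigma> d = {d'\<in>D. h d' = h d}"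
    using r unfolding rotation_system_def by auto
  have sD: "\<And>d. d \<in> D \<Longrightarrow> \<sigma> d \<in> D" using bs bij_betwE by blast
  define s where "s = (\<lambda>x. if x \<in> D then \<sigma> x else x)"
  define a where "a = (\<lambda>x. if x \<in> D then \<alpha> x else x)"
  have sp: "s permutes D"
  proof (rule bij_imp_permutes)
    show "bij_betw s D D" using bs by (rule bij_betw_cong[THEN iffD2, rotated]) (simp add: s_def)
  qed (simp add: s_def)
  have ap: "a permutes D"
  proof (rule bij_imp_permutes)
    show "bij_betw a D D"
      by (rule bij_betw_byWitness[where f'=a]) (auto simp: a_def aD)
  qed (simp add: a_def)
  have perms: "permutation s" "permutation a" using sp ap fD permutation_permutes by blast+
  have ev: "evenperm (s \<circ> a) \<longleftrightarrow> evenperm s = evenperm a" by (rule evenperm_comp[OF perms])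
  have sap: "s \<circ> a permutes D" using permutes_compose[OF ap sp] .
  have P1: "evenperm (s \<circ> a) \<longleftrightarrow> even (card D - norb (s \<circ> a) D)" by (rule parity_perm[OF fD sap])
  have P2: "evenperm s \<longleftrightarrow> even (card D - norb s D)" by (rule parity_perm[OF fD sp])
  have P3: "evenperm a \<longleftrightarrow> even (card D - norb a D)" by (rule parity_perm[OF fD ap])
  have "orb (s \<circ> a) d = orb (\<sigma> \<circ> \<alpha>) d" if "d \<in> D" for d
    by (rule orb_agree[OF _ _ that]) (auto simp: s_def a_def aD sD)
  then have F: "norb (s \<circ> a) D = num_faces D \<alpha> \<sigma>"
    unfolding norb_def num_faces_def using ne by (auto intro!: arg_cong[where f=card] image_cong)
  have "orb s d = {d'\<in>D. h d' = h d}" if "d \<in> D" for d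
  proof -
    have "orb s d = orb \<sigma> d" by (rule orb_agree[OF _ _ that]) (auto simp: s_def sD)
    then show ?thesis using orbs that by simp
  qed
  then have "orb s ` D = (\<lambda>v. {d'\<in>D. h d' = v}) ` (h ` D)" by (auto simp: image_image)
  moreover have "inj_on (\<lambda>v. {d'\<in>D. h d' = v}) (h ` D)"
    by (rule inj_onI) blast
  moreover have "h ` D = V"
  proof
    show "h ` D \<subseteq> V" using aD by auto
    show "V \<subseteq> h ` D"
    proof
      fix v assume v: "v \<in> V"
      obtain d where d: "d \<in> D" using ne by auto
      then have "(v, h d) \<in> (adj D \<alpha> h)\<^sup>*" using c v aD unfolding connected_graph_def by auto
      then show "v \<in> h ` D"
      proof (cases rule: converse_rtranclE)
        case base then show ?thesis using d by auto
      next
        case (step z) then show ?thesis unfolding adj_def by auto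
      qed
    qed
  qed
  ultimately have NV: "norb s D = card V" unfolding norb_def by (simp add: card_image)
  have oa: "orb a d = {d, \<alpha> d}" if "d \<in> D" for d
    using orb_invol[of a d] that aD by (simp add: a_def)
  have U: "\<Union>(orb a ` D) = D" using oa aD by auto
  have key: "{x, \<alpha> x} = {y, \<alpha> y}" if "x \<in> D" "y \<in> D" "z \<in> {x, \<alpha> x}" "z \<in> {y, \<alpha> y}" for x y z
  proof -
    have ax: "\<alpha> (\<alpha> x) = x" and ay: "\<alpha> (\<alpha> y) = y" using aD that(1,2) by blast+
    have z1: "z = x \<or> z = \<alpha> x" using that(3) by simp
    have z2: "z = y \<or> z = \<alpha> y" using that(4) by simp
    have "y = x \<or> y = \<alpha> x" using z1 z2 ax ay by metis
    then show ?thesis using ax by auto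
  qed
  have pw: "pairwise disjnt (orb a ` D)"
  proof (rule pairwiseI)
    fix X Y assume "X \<in> orb a ` D" "Y \<in> orb a ` D" "X \<noteq> Y"
    then obtain x y where xy: "x \<in> D" "y \<in> D" "X = {x, \<alpha> x}" "Y = {y, \<alpha> y}" using oa by auto
    show "disjnt X Y" unfolding disjnt_def
    proof (rule ccontr)
      assume "X \<inter> Y \<noteq> {}"
      then obtain z where "z \<in> X" "z \<in> Y" by blast
      then have "X = Y" using key[OF xy(1,2)] xy(3,4) by simp
      then show False using \<open>X \<noteq> Y\<close> by simp
    qed
  qed
  have fin: "\<And>A. A \<in> orb a ` D \<Longrightarrow> finite A" using oa by auto
  have "card D = sum card (orb a ` D)"
    using card_Union_disjoint[OF pw fin] U by simp
  also have "\<dots> = sum (\<lambda>_. 2) (orb a ` D)"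
  proof (rule sum.cong[OF refl])
    fix X assume "X \<in> orb a ` D"
    then obtain x where x: "x \<in> D" "X = {x, \<alpha> x}" using oa by auto
    then have "\<alpha> x \<noteq> x" using aD by blast
    then show "card X = 2" using x by auto
  qed
  also have "\<dots> = 2 * norb a D" unfolding norb_def by simp
  finally have NE: "card D = 2 * norb a D" .
  have l1: "norb (s \<circ> a) D \<le> card D" "norb s D \<le> card D" using norb_le fD by blast+
  have "even (card D - num_faces D \<alpha> \<sigma>) \<longleftrightarrow> (even (card D - card V) \<longleftrightarrow> even (card D - norb a D))"
    using ev P1 P2 P3 F NV by simp
  then show ?thesis using NE l1 F NV unfolding beta_def by (intro arith_par) auto
qed

lemma loop_faces:
  assumes g: "graph V D \<alpha> h" and r: "rotation_system D h \<sigma>"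
    and d0: "d0 \<in> D" and lp: "h (\<alpha> d0) = h d0" and dg: "degree D h (h d0) \<le> 3"
  shows "num_faces D \<alpha> \<sigma> \<ge> 2"
proof -
  have fD: "finite D" using g unfolding graph_def by auto
  have aD: "\<And>d. d \<in> D \<Longrightarrow> \<alpha> d \<in> D \<and> \<alpha> d \<noteq> d \<and> \<alpha> (\<alpha> d) = d"
    using g unfolding graph_def by auto
  have bs: "bij_betw \<sigma> D D" and orbs: "\<And>d. d \<in> D \<Longrightarrow> orb \<sigma> d = {d'\<in>D. h d' = h d}"
    using r unfolding rotation_system_def by auto
  have inj: "inj_on \<sigma> D" using bs bij_betw_def by blast
  define T where "T = {d'\<in>D. h d' = h d0}"
  have a0: "\<alpha> d0 \<in> D" "\<alpha> d0 \<noteq> d0" "\<alpha> (\<alpha> d0) = d0" using aD d0 by auto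
  have o1: "orb \<sigma> d0 = T" using orbs d0 by (simp add: T_def)
  have o2: "orb \<sigma> (\<alpha> d0) = T" using orbs[OF a0(1)] lp by (simp add: T_def)
  have inT: "d0 \<in> T" "\<alpha> d0 \<in> T" using d0 a0 lp by (auto simp: T_def)
  have s1: "\<sigma> d0 \<in> T" using orb_step[OF orb_self, of \<sigma> d0] o1 by simp
  have s2: "\<sigma> (\<alpha> d0) \<in> T" using orb_step[OF orb_self, of \<sigma> "\<alpha> d0"] o2 by simp
  have n1: "\<sigma> d0 \<noteq> d0"
  proof
    assume "\<sigma> d0 = d0"
    then have "orb \<sigma> d0 = {d0}" by (rule orb_fix)
    then show False using o1 inT a0 by auto
  qed
  have n2: "\<sigma> (\<alpha> d0) \<noteq> \<alpha> d0"
  proof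
    assume "\<sigma> (\<alpha> d0) = \<alpha> d0"
    then have "orb \<sigma> (\<alpha> d0) = {\<alpha> d0}" by (rule orb_fix)
    then show False using o2 inT a0 by auto
  qed
  have cT: "card T \<le> 3" using dg unfolding degree_def T_def .
  have fT: "finite T" using fD unfolding T_def by auto
  obtain f where f: "f \<in> D" "\<sigma> (\<alpha> f) = f"
  proof (cases "\<sigma> (\<alpha> d0) = d0")
    case True then show ?thesis using that d0 by blast
  next
    case False
    show ?thesis
    proof (cases "\<sigma> d0 = \<alpha> d0")
      case True then show ?thesis using that[of "\<alpha> d0"] a0 by simp
    next
      case False2: False
      have "card {d0, \<alpha> d0} = 2" using a0 by simp
      moreover have "{d0, \<alpha> d0} \<subseteq> T" using inT by auto
      ultimately have "card (T - {d0, \<alpha> d0}) \<le> 1" using cT fT by (simp add: card_Diff_subset)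
      moreover have "\<sigma> d0 \<in> T - {d0, \<alpha> d0}" "\<sigma> (\<alpha> d0) \<in> T - {d0, \<alpha> d0}"
        using s1 s2 n1 n2 False False2 by auto
      ultimately have "\<sigma> d0 = \<sigma> (\<alpha> d0)"
        using fT by (metis card_le_Suc0_iff_eq finite_Diff One_nat_def)
      then have "d0 = \<alpha> d0" using inj d0 a0(1) by (metis inj_onD)
      then show ?thesis using a0 by simp
    qed
  qed
  have fa: "\<alpha> f \<in> D" "\<alpha> f \<noteq> f" using aD f(1) by auto
  have of: "orb (\<sigma> \<circ> \<alpha>) f = {f}" by (rule orb_fix) (simp add: f)
  have og: "orb (\<sigma> \<circ> \<alpha>) (\<alpha> f) \<noteq> {f}" using orb_self[of "\<alpha> f" "\<sigma> \<circ> \<alpha>"] fa by auto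
  have sub: "{{f}, orb (\<sigma> \<circ> \<alpha>) (\<alpha> f)} \<subseteq> (\<lambda>d. orb (\<sigma> \<circ> \<alpha>) d) ` D"
    using of f(1) fa(1) by (auto intro: rev_image_eqI)
  have "2 = card {{f}, orb (\<sigma> \<circ> \<alpha>) (\<alpha> f)}" using og by auto
  also have "\<dots> \<le> card ((\<lambda>d. orb (\<sigma> \<circ> \<alpha>) d) ` D)" by (rule card_mono[OF _ sub]) (use fD in auto)
  finally show ?thesis unfolding num_faces_def using f(1) by auto
qed

lemma loop_bridge:
  assumes g: "graph V D \<alpha> h" and d: "d \<in> D" and gD: "g \<in> D" and hg: "h g = h d"
    and hag: "h (\<alpha> g) = h d" and dg: "degree D h (h d) = 3" and nd: "h (\<alpha> d) \<noteq> h d"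
    and r: "(h d, w) \<in> (adj (D - {d, \<alpha> d}) \<alpha> h)\<^sup>*"
  shows "w = h d"
proof -
  have fD: "finite D" using g unfolding graph_def by auto
  have aD: "\<And>e. e \<in> D \<Longrightarrow> \<alpha> e \<in> D \<and> \<alpha> e \<noteq> e \<and> \<alpha> (\<alpha> e) = e"
    using g unfolding graph_def by auto
  define A where "A = {e\<in>D. h e = h d}"
  have ag: "\<alpha> g \<in> D" "\<alpha> g \<noteq> g" "\<alpha> (\<alpha> g) = g" using aD gD by auto
  have sub: "{g, \<alpha> g, d} \<subseteq> A" using gD ag hg hag d by (auto simp: A_def)
  have "d \<noteq> g" using nd hag by auto
  moreover have "d \<noteq> \<alpha> g" using nd ag hg by auto
  ultimately have c3: "card {g, \<alpha> g, d} = 3" using ag by auto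
  have fA: "finite A" using fD by (simp add: A_def)
  have cA: "card A = 3" using dg by (simp add: degree_def A_def)
  have AA: "A = {g, \<alpha> g, d}" using card_subset_eq[OF fA sub] c3 cA by simp
  show ?thesis using r
  proof (induction rule: rtrancl_induct)
    case base then show ?case by simp
  next
    case (step z w')
    then obtain e where e: "e \<in> D - {d, \<alpha> d}" "z = h e" "w' = h (\<alpha> e)" unfolding adj_def by auto
    then have "e \<in> A" using step by (simp add: A_def)
    then have "e = g \<or> e = \<alpha> g" using AA e(1) by auto
    then show ?case using e hg hag ag by auto
  qed
qed

lemma adj_sym_rtrancl:
  assumes cl: "\<And>e. e \<in> D \<Longrightarrow> \<alpha> e \<in> D \<and> \<alpha> (\<alpha> e) = e"
    and r: "(a, b) \<in> (adj D \<alpha> h)\<^sup>*"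
  shows "(b, a) \<in> (adj D \<alpha> h)\<^sup>*"
proof -
  have "(adj D \<alpha> h)\<inverse> \<subseteq> adj D \<alpha> h"
  proof
    fix p assume "p \<in> (adj D \<alpha> h)\<inverse>"
    then obtain e where e: "e \<in> D" "p = (h (\<alpha> e), h e)" unfolding adj_def by auto
    then have "p = (h (\<alpha> e), h (\<alpha> (\<alpha> e)))" "\<alpha> e \<in> D" using cl by auto
    then show "p \<in> adj D \<alpha> h" unfolding adj_def by blast
  qed
  moreover have "(b, a) \<in> ((adj D \<alpha> h)\<inverse>)\<^sup>*" using r by (simp add: rtrancl_converse)
  ultimately show ?thesis using rtrancl_mono by blast
qed

lemma partA:
  assumes c: "cubic V D \<alpha> h" and u: "upper_embeddable V D \<alpha> h" and l: "has_loop D \<alpha> h"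
  shows "odd (beta V D)"
proof -
  have g: "graph V D \<alpha> h" and deg: "\<And>v. v \<in> V \<Longrightarrow> degree D h v = 3"
    using c unfolding cubic_def by auto
  obtain \<sigma> where r: "rotation_system D h \<sigma>" and F: "num_faces D \<alpha> \<sigma> \<le> 2"
    and cn: "connected_graph V D \<alpha> h"
    using u unfolding upper_embeddable_def by auto
  obtain d0 where d0: "d0 \<in> D" "h (\<alpha> d0) = h d0" using l unfolding has_loop_def by auto
  have "h d0 \<in> V" using g d0 unfolding graph_def by auto
  then have "degree D h (h d0) \<le> 3" using deg by simp
  then have "num_faces D \<alpha> \<sigma> \<ge> 2" using loop_faces[OF g r d0] by simp
  then have "num_faces D \<alpha> \<sigma> = 2" using F by simp
  then show ?thesis using euler_parity[OF g cn _ r] d0 by auto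
qed

theorem lemma3:
  fixes V :: "'v set" and D :: "'d set" and \<alpha> :: "'d \<Rightarrow> 'd" and h :: "'d \<Rightarrow> 'v"
  assumes "cubic V D \<alpha> h"
    and "upper_embeddable V D \<alpha> h"
    and "has_loop D \<alpha> h"
  shows "tightly_two_face_embeddable V D \<alpha> h"
proof -
  have oddB: "odd (beta V D)" using partA[OF assms] .
  have g: "graph V D \<alpha> h" and deg: "\<And>v. v \<in> V \<Longrightarrow> degree D h v = 3"
    using assms(1) unfolding cubic_def by auto
  have fD: "finite D" and fV: "finite V" using g unfolding graph_def by auto
  have aD: "\<And>e. e \<in> D \<Longrightarrow> \<alpha> e \<in> D \<and> \<alpha> e \<noteq> e \<and> \<alpha> (\<alpha> e) = e \<and> h e \<in> V"
    using g unfolding graph_def by auto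
  obtain d0 where d0: "d0 \<in> D" "h (\<alpha> d0) = h d0" using assms(3) unfolding has_loop_def by auto
  have notamp: "\<not> amply_upper_embeddable V D \<alpha> h"
  proof
    assume "amply_upper_embeddable V D \<alpha> h"
    then obtain x y where "removable V D \<alpha> h x y" unfolding amply_upper_embeddable_def by auto
    then obtain d where xV: "x \<in> V" and yV: "y \<in> V" and xy: "x \<noteq> y" and dD: "d \<in> D"
      and S: "{e\<in>D. h e = x \<and> h (\<alpha> e) = y} = {d}" and nb: "\<not> is_bridge D \<alpha> h d"
      and u': "upper_embeddable (V - {x, y}) (del_darts D \<alpha> h {x, y}) \<alpha> h"
      unfolding removable_def by blast
    have hd: "h d = x" "h (\<alpha> d) = y" using S by auto
    have ad: "\<alpha> d \<in> D" "\<alpha> d \<noteq> d" "\<alpha> (\<alpha> d) = d" using aD dD by auto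
    have R: "(x, y) \<in> (adj (D - {d, \<alpha> d}) \<alpha> h)\<^sup>*" using nb hd unfolding is_bridge_def by simp
    have nlx: "h (\<alpha> e) \<noteq> x" if "e \<in> D" "h e = x" for e
    proof
      assume "h (\<alpha> e) = x"
      then have "y = h d" using loop_bridge[OF g dD that(1) _ _ _ _ R[folded hd]] that hd deg[OF xV] xy by auto
      then show False using hd xy by simp
    qed
    have cl: "\<alpha> e \<in> D - {d, \<alpha> d} \<and> \<alpha> (\<alpha> e) = e" if "e \<in> D - {d, \<alpha> d}" for e
    proof -
      have e: "e \<in> D" "e \<noteq> d" "e \<noteq> \<alpha> d" using that by auto
      have ae: "\<alpha> e \<in> D" "\<alpha> (\<alpha> e) = e" using aD[OF e(1)] by auto
      have "\<alpha> e \<noteq> d" using ae(2) e(3) by auto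
      moreover have "\<alpha> e \<noteq> \<alpha> d" using ae(2) ad(3) e(2) by metis
      ultimately show ?thesis using ae by auto
    qed
    have R2: "(y, x) \<in> (adj (D - {\<alpha> d, \<alpha> (\<alpha> d)}) \<alpha> h)\<^sup>*"
      using adj_sym_rtrancl[OF cl R] ad(3) by (simp add: insert_commute)
    have nly: "h (\<alpha> e) \<noteq> y" if "e \<in> D" "h e = y" for e
    proof
      assume "h (\<alpha> e) = y"
      then have "x = h (\<alpha> d)"
        using loop_bridge[OF g ad(1) that(1) _ _ _ _ R2[folded hd]] that hd ad deg[OF yV] xy by auto
      then show False using hd xy by simp
    qed
    define D' where "D' = del_darts D \<alpha> h {x, y}"
    define V' where "V' = V - {x, y}"
    obtain \<sigma> where r: "rotation_system D' h \<sigma>" and F: "num_faces D' \<alpha> \<sigma> \<le> 2"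
      and cn: "connected_graph V' D' \<alpha> h" and g': "graph V' D' \<alpha> h"
      using u' unfolding upper_embeddable_def D'_def V'_def by auto
    have v0: "h d0 \<noteq> x" "h d0 \<noteq> y" using nlx nly d0 by auto
    have d0': "d0 \<in> D'" using d0 v0 by (simp add: D'_def del_darts_def)
    have D'D: "D' \<subseteq> D" by (auto simp: D'_def del_darts_def)
    have "degree D' h (h d0) \<le> degree D h (h d0)"
      unfolding degree_def by (rule card_mono) (use fD D'D in auto)
    also have "\<dots> = 3" using deg aD d0 by auto
    finally have "num_faces D' \<alpha> \<sigma> \<ge> 2" using loop_faces[OF g' r d0' d0(2)] by simp
    then have "num_faces D' \<alpha> \<sigma> = 2" using F by simp
    then have oddB': "odd (beta V' D')" using euler_parity[OF g' cn _ r] d0' by auto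
    define A where "A = {e\<in>D. h e \<in> {x, y}}"
    have fA: "finite A" using fD by (simp add: A_def)
    have "A = {e\<in>D. h e = x} \<union> {e\<in>D. h e = y}" by (auto simp: A_def)
    moreover have "card {e\<in>D. h e = x} = 3" "card {e\<in>D. h e = y} = 3"
      using deg xV yV unfolding degree_def by auto
    ultimately have cA: "card A = 6" using xy fD
      by (simp add: card_Un_disjoint disjoint_iff)
    have injA: "inj_on \<alpha> D"
    proof (rule inj_onI)
      fix a b assume ab: "a \<in> D" "b \<in> D" "\<alpha> a = \<alpha> b"
      have "\<alpha> (\<alpha> a) = a" "\<alpha> (\<alpha> b) = b" using aD[OF ab(1)] aD[OF ab(2)] by auto
      then show "a = b" using ab(3) by metis
    qed
    have "card (\<alpha> ` A) = 6" using cA card_image[OF inj_on_subset[OF injA]] by (auto simp: A_def)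
    have int: "A \<inter> \<alpha> ` A = {d, \<alpha> d}"
    proof
      show "A \<inter> \<alpha> ` A \<subseteq> {d, \<alpha> d}"
      proof
        fix e assume "e \<in> A \<inter> \<alpha> ` A"
        then obtain e' where e: "e \<in> D" "h e \<in> {x, y}" "e = \<alpha> e'" "e' \<in> D" "h e' \<in> {x, y}"
          by (auto simp: A_def)
        then have ae: "\<alpha> e = e'" using aD by auto
        show "e \<in> {d, \<alpha> d}"
        proof (cases "h e = x")
          case True
          then have "h (\<alpha> e) = y" using nlx e ae by auto
          then have "e \<in> {e\<in>D. h e = x \<and> h (\<alpha> e) = y}" using True e by auto
          then show ?thesis using S by auto
        next
          case False
          then have hy: "h e = y" using e by auto
          then have "h (\<alpha> e) = x" using nly e ae by auto
          then have "\<alpha> e \<in> {e\<in>D. h e = x \<and> h (\<alpha> e) = y}" using hy e aD by auto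
          then have "\<alpha> e = d" using S by auto
          moreover have "\<alpha> (\<alpha> e) = e" using aD[OF e(1)] by blast
          ultimately have "e = \<alpha> d" by simp
          then show ?thesis by simp
        qed
      qed
      show "{d, \<alpha> d} \<subseteq> A \<inter> \<alpha> ` A"
      proof -
        have "d \<in> A" "\<alpha> d \<in> A" using dD ad hd by (auto simp: A_def)
        then have "d \<in> \<alpha> ` A" "\<alpha> d \<in> \<alpha> ` A" using ad by (auto intro: rev_image_eqI[of "\<alpha> d"])
        then show ?thesis using \<open>d \<in> A\<close> \<open>\<alpha> d \<in> A\<close> by auto
      qed
    qed
    have un: "D - D' = A \<union> \<alpha> ` A"
    proof
      show "D - D' \<subseteq> A \<union> \<alpha> ` A"
      proof
        fix e assume e: "e \<in> D - D'"
        show "e \<in> A \<union> \<alpha> ` A"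
        proof (cases "h e \<in> {x, y}")
          case True then show ?thesis using e by (auto simp: A_def)
        next
          case False
          then have "h (\<alpha> e) \<in> {x, y}" using e by (auto simp: D'_def del_darts_def)
          then have "\<alpha> e \<in> A" using e aD by (auto simp: A_def)
          moreover have "e = \<alpha> (\<alpha> e)" using e aD by auto
          ultimately show ?thesis by blast
        qed
      qed
      show "A \<union> \<alpha> ` A \<subseteq> D - D'"
      proof
        fix e assume "e \<in> A \<union> \<alpha> ` A"
        then show "e \<in> D - D'"
        proof
          assume "e \<in> A" then show ?thesis by (auto simp: A_def D'_def del_darts_def)
        next
          assume "e \<in> \<alpha> ` A"
          then obtain e' where "e' \<in> A" "e = \<alpha> e'" by auto
          then show ?thesis using aD by (auto simp: A_def D'_def del_darts_def)
        qed
      qed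
    qed
    have "card (A \<union> \<alpha> ` A) + card (A \<inter> \<alpha> ` A) = card A + card (\<alpha> ` A)"
      using card_Un_Int[OF fA finite_imageI[OF fA]] by simp
    then have c10: "card (D - D') = 10" using un int cA \<open>card (\<alpha> ` A) = 6\<close> ad by simp
    have cD: "card D = card D' + 10" using c10 card_Diff_subset[OF finite_subset[OF D'D fD] D'D]
      card_mono[OF fD D'D] by simp
    have "card {x, y} \<le> card V" by (rule card_mono) (use fV xV yV in auto)
    then have "card V \<ge> 2" using xy by simp
    then have cV: "card V' + 2 = card V" using xV yV xy fV unfolding V'_def
      by (simp add: card_Diff_subset)
    have "beta V' D' = beta V D - 3" unfolding beta_def using cD cV by auto
    then show False using oddB oddB' by simp
  qed
  show ?thesis unfolding tightly_two_face_embeddable_def two_face_embeddable_def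
    using assms(1,2) oddB notamp by simp
qed

end
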